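(* Let $\nu\in(0,1)$ and $t>0$. For integers $m\ge0$ put $g_m(t):=t^{(1-2^{-m})\nu}f_\nu\big(t^{2^{-m}}\big)$ (so $g_0(t)=f_\nu(t)$). Then for every $m\in\mathbb{N}$, $$t^\nu\le g_m(t)\le g_{m-1}(t),$$ i.e. $$t^\nu\le\cdots\le t^{(1-\frac{1}{2^m})\nu}f_\nu\big(t^{\frac1{2^m}}\big)\le t^{(1-\frac{1}{2^{m-1}})\nu}f_\nu\big(t^{\frac1{2^{m-1}}}\big)\le\cdots\le t^{\frac{3\nu}{4}}f_\nu\big(t^{\frac14}\big)\le t^{\frac{\nu}{2}}f_\nu\big(t^{\frac12}\big)\le f_\nu(t),$$ and moreover $g_m(t)\to t^\nu$ as $m\to\infty$.
   Context: For $\nu\in(0,1)$, $f_\nu(t):=\dfrac{1}{\log t}\left\{\dfrac{1-\nu}{\nu}(t^\nu-1)+\dfrac{\nu}{1-\nu}(t-t^\nu)\right\}$ for $t>0$, $t\ne1$, and $f_\nu(1):=1$ (this is the weighted logarithmic mean $L_\nu(1,t)$). *)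

theory Defs
  imports "HOL-Analysis.Analysis"
begin

definition f_nu :: "real \<Rightarrow> real \<Rightarrow> real" where
  "f_nu \<nu> t = (if t = 1 then 1 else
     (1 / ln t) * ((1 - \<nu>) / \<nu> * (t powr \<nu> - 1) + \<nu> / (1 - \<nu>) * (t - t powr \<nu>)))"

definition g_m :: "real \<Rightarrow> nat \<Rightarrow> real \<Rightarrow> real" where
  "g_m \<nu> m t = t powr ((1 - 1 / 2 ^ m) * \<nu>) * f_nu \<nu> (t powr (1 / 2 ^ m))"

end

theory Submission
  imports Defs
begin

lemma keyB:
  fixes \<nu> s :: real
  assumes nu: "0 < \<nu>" "\<nu> < 1" and s: "0 < s"
  shows "s powr \<nu> * f_nu \<nu> s \<le> f_nu \<nu> (s\<^sup>2)"
proof (cases "s = 1")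
  case True then show ?thesis by (simp add: f_nu_def)
next
  case False
  define a where "a = s powr \<nu>"
  define L where "L = ln s"
  define p where "p = (1 - \<nu>) / \<nu>"
  define q where "q = \<nu> / (1 - \<nu>)"
  have s2: "s\<^sup>2 \<noteq> 1" using False s
    using s False by (auto simp: power2_eq_1_iff)
  have a2: "(s\<^sup>2) powr \<nu> = a\<^sup>2"
  proof -
    have "(s\<^sup>2) powr \<nu> = (s powr 2) powr \<nu>" using s by (simp add: powr_realpow)
    also have "\<dots> = s powr (\<nu> * 2)" by (simp add: powr_powr mult.commute)
    also have "\<dots> = (s powr \<nu>) powr 2" by (simp add: powr_powr)
    also have "\<dots> = a\<^sup>2" unfolding a_def using s by (simp add: powr_realpow)
    finally show ?thesis .
  qed
  have lns2: "ln (s\<^sup>2) = 2 * L" unfolding L_def using s by (simp add: ln_realpow)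
  have Lne: "L \<noteq> 0" unfolding L_def using s False by simp
  have young: "a \<le> \<nu> * s + (1 - \<nu>)"
    using Youngs_inequality_0[of \<nu> "1-\<nu>" s 1] nu s unfolding a_def by simp
  have pq: "p * q = 1" "p > 0" "q > 0" unfolding p_def q_def using nu by auto
  have LHS: "s powr \<nu> * f_nu \<nu> s = a * (p*(a-1) + q*(s-a)) / L"
    using False unfolding f_nu_def a_def p_def q_def L_def by simp
  have RHS: "f_nu \<nu> (s\<^sup>2) = (p*(a\<^sup>2-1) + q*(s\<^sup>2-a\<^sup>2)) / (2*L)"
    using s2 unfolding f_nu_def a2 lns2 p_def q_def by simp
  have D: "(p*(a\<^sup>2-1) + q*(s\<^sup>2-a\<^sup>2)) - 2 * (a * (p*(a-1) + q*(s-a)))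
       = q*(s-a)\<^sup>2 - p*(a-1)\<^sup>2"
    by (simp add: algebra_simps power2_eq_square)
  have sq: "\<nu>\<^sup>2 * (s-a)\<^sup>2 \<ge> (1-\<nu>)\<^sup>2 * (a-1)\<^sup>2 \<longleftrightarrow> q*(s-a)\<^sup>2 \<ge> p*(a-1)\<^sup>2"
  proof -
    have "q*(s-a)\<^sup>2 - p*(a-1)\<^sup>2 = (\<nu>\<^sup>2 * (s-a)\<^sup>2 - (1-\<nu>)\<^sup>2 * (a-1)\<^sup>2) / (\<nu>*(1-\<nu>))"
      using nu unfolding p_def q_def by (simp add: field_simps power2_eq_square)
    moreover have "\<nu>*(1-\<nu>) > 0" using nu by simp
    ultimately show ?thesis
      by (smt (verit, best) divide_nonneg_pos divide_neg_pos)
  qed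
  show ?thesis
  proof (cases "L > 0")
    case True
    have "s > 1" using True s unfolding L_def by (metis ln_le_zero_iff not_le)
    hence "a \<ge> 1" unfolding a_def using nu by (simp add: ge_one_powr_ge_zero)
    have "\<nu> * (s - a) \<ge> (1-\<nu>)*(a-1)" using young by (simp add: algebra_simps)
    moreover have "(1-\<nu>)*(a-1) \<ge> 0" using \<open>a \<ge> 1\<close> nu by simp
    ultimately have "(\<nu> * (s - a))\<^sup>2 \<ge> ((1-\<nu>)*(a-1))\<^sup>2"
      by (simp add: power_mono)
    hence "q*(s-a)\<^sup>2 \<ge> p*(a-1)\<^sup>2" using sq by (simp add: power_mult_distrib)
    hence "2 * (a * (p*(a-1) + q*(s-a))) \<le> p*(a\<^sup>2-1) + q*(s\<^sup>2-a\<^sup>2)" using D by linarith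
    hence "2 * (a * (p*(a-1) + q*(s-a))) / (2*L) \<le> (p*(a\<^sup>2-1) + q*(s\<^sup>2-a\<^sup>2)) / (2*L)"
      using True by (intro divide_right_mono) auto
    then show ?thesis unfolding LHS RHS by simp
  next
    case False
    hence Lneg: "L < 0" using Lne by simp
    have "s < 1" using Lneg s unfolding L_def by (metis ln_ge_zero_iff not_le less_le)
    hence "a \<le> 1" unfolding a_def using nu s by (simp add: powr_le1)
    have "\<nu> * (a - s) \<le> (1-\<nu>)*(1-a)" using young by (simp add: algebra_simps)
    moreover have "\<nu> * (a - s) \<ge> 0"
    proof -
      have "s powr 1 \<le> s powr \<nu>" using \<open>s < 1\<close> s nu by (intro powr_mono') auto
      thus ?thesis unfolding a_def using nu s by simp
    qed
    ultimately have "(\<nu> * (a - s))\<^sup>2 \<le> ((1-\<nu>)*(1-a))\<^sup>2"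
      by (simp add: power_mono)
    hence "(\<nu>\<^sup>2 * (s-a)\<^sup>2) \<le> (1-\<nu>)\<^sup>2 * (a-1)\<^sup>2"
      by (simp add: power_mult_distrib power2_commute)
    moreover have "q*(s-a)\<^sup>2 - p*(a-1)\<^sup>2 = (\<nu>\<^sup>2 * (s-a)\<^sup>2 - (1-\<nu>)\<^sup>2 * (a-1)\<^sup>2) / (\<nu>*(1-\<nu>))"
      using nu unfolding p_def q_def by (simp add: field_simps power2_eq_square)
    moreover have "\<nu>*(1-\<nu>) > 0" using nu by simp
    ultimately have "q*(s-a)\<^sup>2 \<le> p*(a-1)\<^sup>2"
      by (smt (verit, best) divide_nonpos_pos)
    hence "2 * (a * (p*(a-1) + q*(s-a))) \<ge> p*(a\<^sup>2-1) + q*(s\<^sup>2-a\<^sup>2)" using D by linarith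
    hence "2 * (a * (p*(a-1) + q*(s-a))) / (2*L) \<le> (p*(a\<^sup>2-1) + q*(s\<^sup>2-a\<^sup>2)) / (2*L)"
      using Lneg by (intro divide_right_mono_neg) auto
    then show ?thesis unfolding LHS RHS by simp
  qed
qed

lemma f_cont:
  fixes \<nu> :: real
  assumes nu: "0 < \<nu>" "\<nu> < 1"
  shows "isCont (f_nu \<nu>) 1"
proof -
  define p where "p = (1 - \<nu>) / \<nu>"
  define q where "q = \<nu> / (1 - \<nu>)"
  define N where "N s = p*(s powr \<nu> - 1) + q*(s - s powr \<nu>)" for s :: real
  have "(N has_field_derivative (p*(\<nu> * 1 powr (\<nu> - 1)) + q*(1 - \<nu> * 1 powr (\<nu> - 1)))) (at 1)"
    unfolding N_def by (auto intro!: derivative_eq_intros)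
  moreover have "p*(\<nu> * 1 powr (\<nu> - 1)) + q*(1 - \<nu> * 1 powr (\<nu> - 1)) = 1"
    using nu unfolding p_def q_def by (simp add: field_simps)
  ultimately have dN: "(N has_field_derivative 1) (at 1)" by simp
  have dL: "((ln::real\<Rightarrow>real) has_field_derivative 1) (at 1)"
    using DERIV_ln_divide[of 1] by simp
  have N1: "N 1 = 0" unfolding N_def by simp
  have lN: "((\<lambda>y. (N y - N 1) / (y - 1)) \<longlongrightarrow> 1) (at 1)"
    using dN by (simp add: has_field_derivative_iff)
  have lL: "((\<lambda>y::real. (ln y - ln 1) / (y - 1)) \<longlongrightarrow> 1) (at 1)"
    using dL by (simp add: has_field_derivative_iff)
  have "((\<lambda>y::real. ((N y - N 1) / (y - 1)) / ((ln y - ln 1) / (y - 1))) \<longlongrightarrow> 1 / 1) (at 1)"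
    by (rule tendsto_divide[OF lN lL]) simp
  moreover have "eventually (\<lambda>y::real. ((N y - N 1) / (y - 1)) / ((ln y - ln 1) / (y - 1)) = f_nu \<nu> y) (at 1)"
    unfolding eventually_at_filter
  proof (rule always_eventually, intro allI impI)
    fix y :: real assume y: "y \<noteq> 1"
    have "f_nu \<nu> y = N y / ln y" using y unfolding f_nu_def N_def p_def q_def by simp
    moreover have "(N y / (y - 1)) / (ln y / (y - 1)) = N y / ln y"
      using y by (cases "ln y = 0") (simp_all add: field_simps)
    ultimately show "((N y - N 1) / (y - 1)) / ((ln y - ln 1) / (y - 1)) = f_nu \<nu> y"
      by (simp add: N1)
  qed
  ultimately have "(f_nu \<nu> \<longlongrightarrow> 1) (at 1)"
    by (simp add: tendsto_cong)
  thus ?thesis unfolding isCont_def by (simp add: f_nu_def)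
qed


theorem corollary2p10:
  fixes \<nu> t :: real
  assumes "0 < \<nu>" and "\<nu> < 1" and "0 < t"
  shows "(\<forall>m::nat. m \<ge> 1 \<longrightarrow> t powr \<nu> \<le> g_m \<nu> m t \<and> g_m \<nu> m t \<le> g_m \<nu> (m - 1) t)
         \<and> ((\<lambda>m. g_m \<nu> m t) \<longlonglongrightarrow> t powr \<nu>)"
proof -
  note nu = assms(1,2) and tp = assms(3)
  define g where "g k = g_m \<nu> k t" for k
  have step: "g (Suc k) \<le> g k" for k
  proof -
    define s where "s = t powr (1 / 2 ^ Suc k)"
    define T where "T = t powr ((1 - 1 / 2 ^ k) * \<nu>)"
    have sp: "s > 0" unfolding s_def using tp by simp
    have Tp: "T \<ge> 0" unfolding T_def by simp
    have ss: "s\<^sup>2 = t powr (1 / 2 ^ k)"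
    proof -
      have "s\<^sup>2 = s powr 2" using sp by (simp add: powr_realpow)
      also have "\<dots> = t powr (1 / 2 ^ Suc k * 2)" unfolding s_def by (simp add: powr_powr)
      also have "1 / 2 ^ Suc k * 2 = (1 / 2 ^ k :: real)" by simp
      finally show ?thesis .
    qed
    have Ts: "T * s powr \<nu> = t powr ((1 - 1 / 2 ^ Suc k) * \<nu>)"
    proof -
      have "s powr \<nu> = t powr (1 / 2 ^ Suc k * \<nu>)" unfolding s_def by (simp add: powr_powr)
      hence "T * s powr \<nu> = t powr ((1 - 1 / 2 ^ k) * \<nu> + 1 / 2 ^ Suc k * \<nu>)"
        unfolding T_def by (simp add: powr_add)
      also have "(1 - 1 / 2 ^ k) * \<nu> + 1 / 2 ^ Suc k * \<nu> = (1 - 1 / 2 ^ Suc k) * \<nu>"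
        by (simp add: field_simps)
      finally show ?thesis .
    qed
    have "g (Suc k) = T * (s powr \<nu> * f_nu \<nu> s)"
      unfolding g_def g_m_def using Ts s_def by (simp add: mult.assoc[symmetric])
    also have "\<dots> \<le> T * f_nu \<nu> (s\<^sup>2)"
      using keyB[OF nu sp] Tp by (rule mult_left_mono)
    also have "\<dots> = g k" unfolding g_def g_m_def ss T_def by simp
    finally show ?thesis .
  qed
  have dec: "decseq g" using step by (simp add: decseq_Suc_iff)
  have inv: "(\<lambda>k. 1 / 2 ^ k :: real) \<longlonglongrightarrow> 0"
    using LIMSEQ_inverse_realpow_zero[of "2::real"] by (simp add: divide_inverse)
  have l1: "(\<lambda>k. t powr ((1 - 1 / 2 ^ k) * \<nu>)) \<longlonglongrightarrow> t powr ((1 - 0) * \<nu>)"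
    using tp by (intro tendsto_intros inv) auto
  have l2: "(\<lambda>k. t powr (1 / 2 ^ k)) \<longlonglongrightarrow> t powr 0"
    using tp by (intro tendsto_intros inv) auto
  have l3: "(\<lambda>k. f_nu \<nu> (t powr (1 / 2 ^ k))) \<longlonglongrightarrow> f_nu \<nu> 1"
    using isCont_tendsto_compose[OF f_cont[OF nu] ] l2 tp by simp
  have lim: "g \<longlonglongrightarrow> t powr \<nu> * 1"
    unfolding g_def g_m_def using tendsto_mult[OF l1 l3] by (simp add: f_nu_def)
  hence lim': "g \<longlonglongrightarrow> t powr \<nu>" by simp
  have "t powr \<nu> \<le> g m" for m using decseq_ge[OF dec lim'] .
  moreover have "m \<ge> 1 \<Longrightarrow> g m \<le> g (m - 1)" for m
    using step[of "m - 1"] by simp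
  ultimately show ?thesis using lim' unfolding g_def by auto
qed

end
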